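(* Let $X$ be a topological space and $k$ a complete non-Archimedean valued field. For every $x\in \mathrm{BSC}_k(X)$ the support $\mathrm{supp}(x)=\{f\in C_{bd}(X,k): |f|_x=0\}$ is a maximal ideal of $C_{bd}(X,k)$, and the map $$\mathscr F_{\mathrm{supp}}:\mathrm{BSC}_k(X)\to \mathrm{UF}(X),\qquad x\mapsto \mathscr F_{\mathrm{supp}(x)}=\{U\in \mathrm{CO}(X): 1_U\notin \mathrm{supp}(x)\}$$ is a homeomorphism.
   Context: Topological spaces are not assumed Hausdorff. $k$ is a field complete with respect to a non-Archimedean absolute value $|\cdot|$ of rank one (possibly trivial). $C_{bd}(X,k)$ is the commutative $k$-algebra of bounded continuous functions $X\to k$ with the supremum norm $\|f\|=\sup_{x\in X}|f(x)|$; for $U\subset X$ clopen, $1_U$ is its characteristic function. $\mathrm{CO}(X)$ denotes the set of clopen (closed and open) subsets of $X$. An ultrafiltre of $\mathrm{CO}(X)$ is a subset $\mathscr F\subset \mathrm{CO}(X)$ with: $\emptyset\notin\mathscr F$; $U\cap V\in\mathscr F$ for $U,V\in\mathscr F$; $U\cup V\in\mathscr F$ for $U\in \mathrm{CO}(X)$, $V\in\mathscr F$; and for every $U\in\mathrm{CO}(X)$, $U\in\mathscr F$ or $X\setminus U\in\mathscr F$. $\mathrm{UF}(X)$ is the set of such ultrafiltres with the topology having as basis the sets $\{\mathscr F\in\mathrm{UF}(X): U\in\mathscr F\}$, $U\in\mathrm{CO}(X)$. $\mathrm{BSC}_k(X)$ is the Berkovich spectrum $\mathcal M_k(C_{bd}(X,k))$: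 the set of multiplicative seminorms $f\mapsto |f|_x$ on $C_{bd}(X,k)$ (so $|fg|_x=|f|_x|g|_x$, $|1|_x=1$, $|f+g|_x\le\max(|f|_x,|g|_x)$, $|af|_x=|a||f|_x$ for $a\in k$) that are bounded ($|f|_x\le\|f\|$), with the weakest topology making all maps $x\mapsto|f|_x$ continuous; it is compact Hausdorff. *)

theory Defs
  imports "HOL-Analysis.Analysis" "HOL-Algebra.Ideal"
begin

definition nonarch_complete_abs :: "('k::field \<Rightarrow> real) \<Rightarrow> bool" where
  "nonarch_complete_abs absv \<longleftrightarrow>
     (\<forall>a. absv a \<ge> 0) \<and>
     (\<forall>a. absv a = 0 \<longleftrightarrow> a = 0) \<and>
     (\<forall>a b. absv (a * b) = absv a * absv b) \<and>
     (\<forall>a b. absv (a + b) \<le> max (absv a) (absv b)) \<and>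
     (\<forall>s :: nat \<Rightarrow> 'k.
        (\<forall>e>0. \<exists>N. \<forall>m\<ge>N. \<forall>n\<ge>N. absv (s m - s n) < e) \<longrightarrow>
        (\<exists>l. \<forall>e>0. \<exists>N. \<forall>n\<ge>N. absv (s n - l) < e))"

text \<open>Functions are represented extensionally: they vanish outside the topspace.
  Continuity is w.r.t. the topology on k induced by absv.\<close>

definition cont_k :: "'a topology \<Rightarrow> ('k::field \<Rightarrow> real) \<Rightarrow> ('a \<Rightarrow> 'k) \<Rightarrow> bool" where
  "cont_k X absv f \<longleftrightarrow>
     (\<forall>x\<in>topspace X. \<forall>e>0. \<exists>U. openin X U \<and> x \<in> U \<and>
        (\<forall>y\<in>U. absv (f y - f x) < e))"

definition Cbd :: "'a topology \<Rightarrow> ('k::field \<Rightarrow> real) \<Rightarrow> ('a \<Rightarrow> 'k) set" where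
  "Cbd X absv = {f. cont_k X absv f \<and> (\<exists>B. \<forall>x\<in>topspace X. absv (f x) \<le> B)
                    \<and> (\<forall>x. x \<notin> topspace X \<longrightarrow> f x = 0)}"

definition supnorm :: "'a topology \<Rightarrow> ('k::field \<Rightarrow> real) \<Rightarrow> ('a \<Rightarrow> 'k) \<Rightarrow> real" where
  "supnorm X absv f = Sup (insert 0 ((\<lambda>x. absv (f x)) ` topspace X))"

definition one_k :: "'a topology \<Rightarrow> 'a \<Rightarrow> 'k::field" where
  "one_k X = (\<lambda>x. if x \<in> topspace X then 1 else 0)"

definition Cbd_ring :: "'a topology \<Rightarrow> ('k::field \<Rightarrow> real) \<Rightarrow> ('a \<Rightarrow> 'k) ring" where
  "Cbd_ring X absv = \<lparr> carrier = Cbd X absv,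
                        monoid.mult = (\<lambda>f g x. f x * g x),
                        one = one_k X,
                        zero = (\<lambda>x. 0),
                        add = (\<lambda>f g x. f x + g x) \<rparr>"

definition char_k :: "'a set \<Rightarrow> 'a \<Rightarrow> 'k::field" where
  "char_k U = (\<lambda>x. if x \<in> U then 1 else 0)"

definition BSC :: "'a topology \<Rightarrow> ('k::field \<Rightarrow> real) \<Rightarrow> (('a \<Rightarrow> 'k) \<Rightarrow> real) set" where
  "BSC X absv = {p. p \<in> extensional (Cbd X absv) \<and>
     (\<forall>f\<in>Cbd X absv. 0 \<le> p f) \<and>
     (\<forall>f\<in>Cbd X absv. \<forall>g\<in>Cbd X absv. p (\<lambda>x. f x * g x) = p f * p g) \<and>
     p (one_k X) = 1 \<and>
     (\<forall>f\<in>Cbd X absv. \<forall>g\<in>Cbd X absv. p (\<lambda>x. f x + g x) \<le> max (p f) (p g)) \<and>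
     (\<forall>a. \<forall>f\<in>Cbd X absv. p (\<lambda>x. a * f x) = absv a * p f) \<and>
     (\<forall>f\<in>Cbd X absv. p f \<le> supnorm X absv f)}"

text \<open>Weakest topology making all evaluations p \<mapsto> p f continuous.\<close>
definition BSC_top :: "'a topology \<Rightarrow> ('k::field \<Rightarrow> real) \<Rightarrow> (('a \<Rightarrow> 'k) \<Rightarrow> real) topology" where
  "BSC_top X absv = subtopology (product_topology (\<lambda>f. euclideanreal) (Cbd X absv)) (BSC X absv)"

definition supp :: "'a topology \<Rightarrow> ('k::field \<Rightarrow> real) \<Rightarrow> (('a \<Rightarrow> 'k) \<Rightarrow> real) \<Rightarrow> ('a \<Rightarrow> 'k) set" where
  "supp X absv p = {f\<in>Cbd X absv. p f = 0}"

definition CO :: "'a topology \<Rightarrow> 'a set set" where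
  "CO X = {U. closedin X U \<and> openin X U}"

definition UF :: "'a topology \<Rightarrow> 'a set set set" where
  "UF X = {F. F \<subseteq> CO X \<and> {} \<notin> F \<and>
     (\<forall>U\<in>F. \<forall>V\<in>F. U \<inter> V \<in> F) \<and>
     (\<forall>U\<in>CO X. \<forall>V\<in>F. U \<union> V \<in> F) \<and>
     (\<forall>U\<in>CO X. U \<in> F \<or> topspace X - U \<in> F)}"

text \<open>Topology with basis the sets {F \<in> UF X. U \<in> F}, U clopen.\<close>
definition UF_top :: "'a topology \<Rightarrow> 'a set set topology" where
  "UF_top X = topology (\<lambda>S. S \<subseteq> UF X \<and>
     (\<forall>F\<in>S. \<exists>U\<in>CO X. U \<in> F \<and> {G\<in>UF X. U \<in> G} \<subseteq> S))"

definition Fsupp :: "'a topology \<Rightarrow> ('k::field \<Rightarrow> real) \<Rightarrow> (('a \<Rightarrow> 'k) \<Rightarrow> real) \<Rightarrow> 'a set set" where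
  "Fsupp X absv p = {U\<in>CO X. (char_k U :: 'a \<Rightarrow> 'k) \<notin> supp X absv p}"

end

theory Submission
  imports Defs
begin

locale nac =
  fixes X :: "'a topology" and absv :: "'k::field \<Rightarrow> real"
  assumes nac: "nonarch_complete_abs absv"
begin

abbreviation "T \<equiv> topspace X"

lemma nac_all: "(\<forall>a. 0 \<le> absv a) \<and> (\<forall>a. (absv a = 0) = (a = 0)) \<and> (\<forall>a b. absv (a * b) = absv a * absv b) \<and> (\<forall>a b. absv (a + b) \<le> max (absv a) (absv b))"
  using nac unfolding nonarch_complete_abs_def by (elim conjE) (intro conjI; assumption)
lemma ab_nonneg[simp]: "absv a \<ge> 0" by (rule nac_all[THEN conjunct1, rule_format])
lemma ab_zero_iff[simp]: "absv a = 0 \<longleftrightarrow> a = 0" by (rule nac_all[THEN conjunct2, THEN conjunct1, rule_format])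
lemma ab_mult[simp]: "absv (a * b) = absv a * absv b" by (rule nac_all[THEN conjunct2, THEN conjunct2, THEN conjunct1, rule_format])
lemma ab_ultra: "absv (a + b) \<le> max (absv a) (absv b)" by (rule nac_all[THEN conjunct2, THEN conjunct2, THEN conjunct2, rule_format])

lemma ab_zero[simp]: "absv 0 = 0" by simp
lemma ab_one[simp]: "absv 1 = 1"
proof -
  have "absv 1 = absv 1 * absv 1" using ab_mult[of 1 1] by simp
  moreover have "absv 1 \<noteq> 0" by simp
  ultimately show ?thesis by simp
qed
lemma ab_minus1: "absv (-1) = 1"
proof -
  have "absv (-1) * absv (-1) = absv ((-1) * (-1))" by (rule ab_mult[symmetric])
  also have "\<dots> = 1" by (simp del: ab_mult)
  finally have "absv (-1) * absv (-1) = 1" .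
  then have "(absv (-1) - 1) * (absv (-1) + 1) = 0" by (simp add: algebra_simps)
  moreover have "absv (-1) + 1 \<noteq> 0" using ab_nonneg[of "-1"] by linarith
  ultimately show ?thesis by simp
qed
lemma ab_uminus[simp]: "absv (- a) = absv a"
  using ab_mult[of "-1" a] ab_minus1 by simp
lemma ab_sym: "absv (a - b) = absv (b - a)"
  by (metis ab_uminus minus_diff_eq)
lemma ab_inverse[simp]: "absv (inverse a) = inverse (absv a)"
proof (cases "a = 0")
  case False
  then have "absv (inverse a) * absv a = 1" using ab_mult[of "inverse a" a] by simp
  then show ?thesis by (metis inverse_unique mult.commute)
qed simp
lemma ab_diff: "absv (a - b) \<le> max (absv a) (absv b)"
  using ab_ultra[of a "-b"] by simp
lemma ab_strict: assumes "absv (b - a) < absv a" shows "absv b = absv a"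
proof -
  have "absv b \<le> max (absv a) (absv (b - a))" using ab_ultra[of a "b - a"] by simp
  moreover have "absv a \<le> max (absv b) (absv (b - a))" using ab_diff[of b "b - a"] by simp
  ultimately show ?thesis using assms unfolding le_max_iff_disj by linarith
qed

section \<open>Bounded continuous functions\<close>

lemma CbdD0:
  assumes "f \<in> Cbd X absv"
  shows "cont_k X absv f \<and> (\<exists>B. \<forall>x\<in>T. absv (f x) \<le> B) \<and> (\<forall>x. x \<notin> T \<longrightarrow> f x = 0)"
  using assms unfolding Cbd_def mem_Collect_eq .

lemma CbdD:
  assumes "f \<in> Cbd X absv"
  shows "cont_k X absv f" "\<exists>B\<ge>0. \<forall>x\<in>T. absv (f x) \<le> B" "\<And>x. x \<notin> T \<Longrightarrow> f x = 0"
proof -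
  note h = CbdD0[OF assms]
  show "cont_k X absv f" using h by (rule conjunct1)
  obtain B where B: "\<forall>x\<in>T. absv (f x) \<le> B" using h by (elim conjE exE)
  show "\<exists>B\<ge>0. \<forall>x\<in>T. absv (f x) \<le> B"
  proof (intro exI[of _ "max B 0"] conjI ballI)
    fix x assume "x \<in> T" then show "absv (f x) \<le> max B 0" using B by (simp add: le_max_iff_disj)
  qed simp
  show "\<And>x. x \<notin> T \<Longrightarrow> f x = 0" using h by (elim conjE) (erule allE, erule mp)
qed

lemma CbdI:
  assumes "cont_k X absv f" "\<And>x. x \<in> T \<Longrightarrow> absv (f x) \<le> B" "\<And>x. x \<notin> T \<Longrightarrow> f x = 0"
  shows "f \<in> Cbd X absv"
  unfolding Cbd_def mem_Collect_eq using assms by (intro conjI exI[of _ B] ballI allI impI)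

lemma contD:
  assumes "f \<in> Cbd X absv" "x \<in> T" "e > 0"
  obtains U where "openin X U" "x \<in> U" "\<And>y. y \<in> U \<Longrightarrow> absv (f y - f x) < e"
proof -
  have "\<forall>x\<in>T. \<forall>e>0. \<exists>U. openin X U \<and> x \<in> U \<and> (\<forall>y\<in>U. absv (f y - f x) < e)"
    using CbdD(1)[OF assms(1)] unfolding cont_k_def .
  then obtain U where "openin X U" "x \<in> U" "\<forall>y\<in>U. absv (f y - f x) < e"
    using assms(2,3) by meson
  then show ?thesis using that by blast
qed

lemma Cbd_mult:
  assumes f: "f \<in> Cbd X absv" and g: "g \<in> Cbd X absv"
  shows "(\<lambda>x. f x * g x) \<in> Cbd X absv"
proof -
  obtain Bf where Bf: "Bf \<ge> 0" "\<forall>x\<in>T. absv (f x) \<le> Bf" using CbdD(2)[OF f] by blast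
  obtain Bg where Bg: "Bg \<ge> 0" "\<forall>x\<in>T. absv (g x) \<le> Bg" using CbdD(2)[OF g] by blast
  show ?thesis
  proof (rule CbdI[where B="Bf * Bg"])
    fix x assume x: "x \<in> T"
    have "absv (f x) * absv (g x) \<le> Bf * Bg"
      by (rule mult_mono) (use Bf Bg x in auto)
    then show "absv (f x * g x) \<le> Bf * Bg" by simp
  next
    fix x assume "x \<notin> T" then show "f x * g x = 0" using CbdD(3)[OF f] by simp
  next
    show "cont_k X absv (\<lambda>x. f x * g x)"
      unfolding cont_k_def
    proof (intro ballI allI impI)
      fix x e assume x: "x \<in> T" and e: "(e::real) > 0"
      define B where "B = max Bf Bg + 1"
      have B: "B > 0" "Bf \<le> B" "Bg \<le> B" using Bf Bg unfolding B_def by auto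
      have eB: "e / B > 0" using e B by simp
      obtain U1 where U1: "openin X U1" "x \<in> U1" "\<And>y. y \<in> U1 \<Longrightarrow> absv (f y - f x) < e / B"
        using contD[OF f x eB] by blast
      obtain U2 where U2: "openin X U2" "x \<in> U2" "\<And>y. y \<in> U2 \<Longrightarrow> absv (g y - g x) < e / B"
        using contD[OF g x eB] by blast
      show "\<exists>U. openin X U \<and> x \<in> U \<and> (\<forall>y\<in>U. absv (f y * g y - f x * g x) < e)"
      proof (intro exI conjI ballI)
        show "openin X (U1 \<inter> U2)" by (rule openin_Int[OF U1(1) U2(1)])
        show "x \<in> U1 \<inter> U2" using U1(2) U2(2) by (rule IntI)
        fix y assume y: "y \<in> U1 \<inter> U2"
        then have y1: "y \<in> U1" and y2: "y \<in> U2" by auto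
        have yT: "y \<in> T" using openin_subset[OF U1(1)] y1 by (rule subsetD)
        have eq: "f y * g y - f x * g x = f y * (g y - g x) + (f y - f x) * g x"
          by (simp add: algebra_simps)
        have a1: "absv (f y) * absv (g y - g x) < e"
        proof -
          have "absv (f y) * absv (g y - g x) \<le> B * absv (g y - g x)"
            by (rule mult_right_mono) (use Bf(2) yT B(2) in auto)
          also have "\<dots> < B * (e / B)" by (rule mult_strict_left_mono[OF U2(3)[OF y2] B(1)])
          also have "\<dots> = e" using B by simp
          finally show ?thesis .
        qed
        have a2: "absv (f y - f x) * absv (g x) < e"
        proof -
          have "absv (f y - f x) * absv (g x) \<le> absv (f y - f x) * B"
            by (rule mult_left_mono) (use Bg(2) x B(3) in auto)
          also have "\<dots> < (e / B) * B" by (rule mult_strict_right_mono[OF U1(3)[OF y1] B(1)])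
          also have "\<dots> = e" using B by simp
          finally show ?thesis .
        qed
        have "absv (f y * (g y - g x) + (f y - f x) * g x) \<le> max (absv (f y * (g y - g x))) (absv ((f y - f x) * g x))"
          by (rule ab_ultra)
        also have "\<dots> < e" using a1 a2 by (simp only: ab_mult max_less_iff_conj)
        finally show "absv (f y * g y - f x * g x) < e" unfolding eq .
      qed
    qed
  qed
qed

lemma Cbd_add:
  assumes f: "f \<in> Cbd X absv" and g: "g \<in> Cbd X absv"
  shows "(\<lambda>x. f x + g x) \<in> Cbd X absv"
proof -
  obtain Bf where Bf: "Bf \<ge> 0" "\<forall>x\<in>T. absv (f x) \<le> Bf" using CbdD(2)[OF f] by blast
  obtain Bg where Bg: "Bg \<ge> 0" "\<forall>x\<in>T. absv (g x) \<le> Bg" using CbdD(2)[OF g] by blast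
  show ?thesis
  proof (rule CbdI[where B="max Bf Bg"])
  show "\<And>x. x \<in> T \<Longrightarrow> absv (f x + g x) \<le> max Bf Bg"
    using Bf Bg ab_ultra by (meson max.mono order.trans)
  show "\<And>x. x \<notin> T \<Longrightarrow> f x + g x = 0" using CbdD(3)[OF f] CbdD(3)[OF g] by simp
  show "cont_k X absv (\<lambda>x. f x + g x)"
    unfolding cont_k_def
  proof (intro ballI allI impI)
    fix x e assume x: "x \<in> T" and e: "(e::real) > 0"
    obtain U1 where U1: "openin X U1" "x \<in> U1" "\<And>y. y \<in> U1 \<Longrightarrow> absv (f y - f x) < e"
      using contD[OF f x e] by blast
    obtain U2 where U2: "openin X U2" "x \<in> U2" "\<And>y. y \<in> U2 \<Longrightarrow> absv (g y - g x) < e"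
      using contD[OF g x e] by blast
    show "\<exists>U. openin X U \<and> x \<in> U \<and> (\<forall>y\<in>U. absv (f y + g y - (f x + g x)) < e)"
    proof (intro exI conjI ballI)
      show "openin X (U1 \<inter> U2)" using U1 U2 by auto
      show "x \<in> U1 \<inter> U2" using U1 U2 by auto
      fix y assume y: "y \<in> U1 \<inter> U2"
      have eq: "f y + g y - (f x + g x) = (f y - f x) + (g y - g x)" by (simp add: algebra_simps)
      show "absv (f y + g y - (f x + g x)) < e"
        unfolding eq using ab_ultra[of "f y - f x" "g y - g x"] U1(3) U2(3) y by fastforce
    qed
  qed
qed
qed

lemma one_k_char: "one_k X = char_k T"
  unfolding one_k_def char_k_def by simp

lemma CO_top: "T \<in> CO X" unfolding CO_def by auto
lemma CO_sub: "U \<in> CO X \<Longrightarrow> U \<subseteq> T" unfolding CO_def using closedin_subset by blast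
lemma CO_compl: "U \<in> CO X \<Longrightarrow> T - U \<in> CO X" unfolding CO_def
  using closedin_def openin_closedin_eq by blast
lemma CO_inter: "U \<in> CO X \<Longrightarrow> V \<in> CO X \<Longrightarrow> U \<inter> V \<in> CO X" unfolding CO_def by auto
lemma CO_union: "U \<in> CO X \<Longrightarrow> V \<in> CO X \<Longrightarrow> U \<union> V \<in> CO X" unfolding CO_def by auto
lemma CO_empty: "{} \<in> CO X" unfolding CO_def by auto

lemma char_Cbd:
  assumes U: "U \<in> CO X"
  shows "(char_k U :: 'a \<Rightarrow> 'k) \<in> Cbd X absv"
proof (rule CbdI)
  show "\<And>x. x \<in> T \<Longrightarrow> absv (char_k U x :: 'k) \<le> 1" by (simp add: char_k_def)
  show "\<And>x. x \<notin> T \<Longrightarrow> (char_k U x :: 'k) = 0" using CO_sub[OF U] by (auto simp: char_k_def)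
  show "cont_k X absv (char_k U :: 'a \<Rightarrow> 'k)"
    unfolding cont_k_def
  proof (intro ballI allI impI)
    fix x e assume x: "x \<in> T" and e: "(e::real) > 0"
    show "\<exists>V. openin X V \<and> x \<in> V \<and> (\<forall>y\<in>V. absv ((char_k U y :: 'k) - char_k U x) < e)"
    proof (cases "x \<in> U")
      case True
      then show ?thesis using U e unfolding CO_def by (intro exI[of _ U]) (auto simp: char_k_def)
    next
      case False
      have "openin X (T - U)" using U unfolding CO_def closedin_def by blast
      then show ?thesis using False x e by (intro exI[of _ "T - U"]) (auto simp: char_k_def)
    qed
  qed
qed

lemma one_Cbd: "one_k X \<in> Cbd X absv"
  unfolding one_k_char by (rule char_Cbd[OF CO_top])

lemma const_Cbd: "(\<lambda>x. a * one_k X x) \<in> Cbd X absv"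
proof (rule CbdI)
  show "\<And>x. x \<in> T \<Longrightarrow> absv (a * one_k X x) \<le> absv a" by (simp add: one_k_def)
  show "\<And>x. x \<notin> T \<Longrightarrow> a * one_k X x = 0" by (simp add: one_k_def)
  show "cont_k X absv (\<lambda>x. a * one_k X x)"
    unfolding cont_k_def by (intro ballI allI impI exI[of _ T]) (auto simp: one_k_def)
qed

lemma scal_eq: assumes f: "f \<in> Cbd X absv" shows "(\<lambda>x. a * f x) = (\<lambda>x. (a * one_k X x) * f x)"
proof
  fix x show "a * f x = (a * one_k X x) * f x"
    using CbdD(3)[OF f, of x] by (cases "x \<in> T") (simp_all add: one_k_def)
qed

lemma scal_Cbd: "f \<in> Cbd X absv \<Longrightarrow> (\<lambda>x. a * f x) \<in> Cbd X absv"
  using scal_eq[of f a] Cbd_mult[OF const_Cbd] by simp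

lemma zero_Cbd: "(\<lambda>x. 0) \<in> Cbd X absv"
  using scal_Cbd[OF one_Cbd, of 0] by simp

lemma one_mult: assumes f: "f \<in> Cbd X absv" shows "(\<lambda>x. one_k X x * f x) = f"
proof
  fix x show "one_k X x * f x = f x"
    using CbdD(3)[OF f, of x] by (cases "x \<in> T") (simp_all add: one_k_def)
qed

definition Ur :: "('a \<Rightarrow> 'k) \<Rightarrow> real \<Rightarrow> 'a set" where
  "Ur f r = {x \<in> T. r \<le> absv (f x)}"

lemma Ur_CO:
  assumes f: "f \<in> Cbd X absv" and r: "r > 0"
  shows "Ur f r \<in> CO X"
proof -
  have op: "openin X (Ur f r)"
  proof (subst openin_subopen, intro ballI)
    fix x assume x: "x \<in> Ur f r"
    then have xT: "x \<in> T" and rx: "r \<le> absv (f x)" unfolding Ur_def by auto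
    obtain U where U: "openin X U" "x \<in> U" "\<And>y. y \<in> U \<Longrightarrow> absv (f y - f x) < absv (f x)"
      using contD[OF f xT, of "absv (f x)"] r rx by auto
    have "U \<subseteq> Ur f r"
    proof
      fix y assume y: "y \<in> U"
      then have "y \<in> T" using U(1) openin_subset by blast
      moreover have "absv (f y) = absv (f x)" using ab_strict U(3)[OF y] by blast
      ultimately show "y \<in> Ur f r" using rx unfolding Ur_def by auto
    qed
    then show "\<exists>V. openin X V \<and> x \<in> V \<and> V \<subseteq> Ur f r" using U by blast
  qed
  have cl: "openin X (T - Ur f r)"
  proof (subst openin_subopen, intro ballI)
    fix x assume x: "x \<in> T - Ur f r"
    then have xT: "x \<in> T" and rx: "absv (f x) < r" unfolding Ur_def by auto
    obtain U where U: "openin X U" "x \<in> U" "\<And>y. y \<in> U \<Longrightarrow> absv (f y - f x) < r"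
      using contD[OF f xT, of r] r by auto
    have "U \<subseteq> T - Ur f r"
    proof
      fix y assume y: "y \<in> U"
      then have "y \<in> T" using U(1) openin_subset by blast
      moreover have "absv (f y) < r"
        using ab_ultra[of "f y - f x" "f x"] U(3)[OF y] rx by simp
      ultimately show "y \<in> T - Ur f r" unfolding Ur_def by auto
    qed
    then show "\<exists>V. openin X V \<and> x \<in> V \<and> V \<subseteq> T - Ur f r" using U by blast
  qed
  have "Ur f r \<subseteq> T" unfolding Ur_def by auto
  then show ?thesis unfolding CO_def closedin_def using op cl by auto
qed

lemma Ur_compl: "T - Ur f r = {x \<in> T. absv (f x) < r}"
  unfolding Ur_def by auto

definition ginv :: "('a \<Rightarrow> 'k) \<Rightarrow> real \<Rightarrow> 'a \<Rightarrow> 'k" where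
  "ginv f r = (\<lambda>x. if x \<in> Ur f r then inverse (f x) else 0)"

lemma ginv_bound: "r > 0 \<Longrightarrow> absv (ginv f r x) \<le> inverse r"
  unfolding ginv_def Ur_def by (auto intro: le_imp_inverse_le)

lemma ginv_mult: "r > 0 \<Longrightarrow> (\<lambda>x. f x * ginv f r x) = char_k (Ur f r)"
proof
  fix x assume r: "r > 0"
  show "f x * ginv f r x = char_k (Ur f r) x"
  proof (cases "x \<in> Ur f r")
    case True
    then have "f x \<noteq> 0" using r unfolding Ur_def by auto
    then show ?thesis using True by (simp add: ginv_def char_k_def)
  qed (simp add: ginv_def char_k_def)
qed

lemma ginv_Cbd:
  assumes f: "f \<in> Cbd X absv" and r: "r > 0"
  shows "ginv f r \<in> Cbd X absv"
proof (rule CbdI)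
  show "\<And>x. x \<in> T \<Longrightarrow> absv (ginv f r x) \<le> inverse r" using ginv_bound[OF r] by blast
  show "\<And>x. x \<notin> T \<Longrightarrow> ginv f r x = 0" unfolding ginv_def Ur_def by auto
  have UCO: "Ur f r \<in> CO X" by (rule Ur_CO[OF f r])
  show "cont_k X absv (ginv f r)"
    unfolding cont_k_def
  proof (intro ballI allI impI)
    fix x e assume x: "x \<in> T" and e: "(e::real) > 0"
    show "\<exists>U. openin X U \<and> x \<in> U \<and> (\<forall>y\<in>U. absv (ginv f r y - ginv f r x) < e)"
    proof (cases "x \<in> Ur f r")
      case False
      have "openin X (T - Ur f r)" using UCO unfolding CO_def closedin_def by blast
      then show ?thesis using False x e by (intro exI[of _ "T - Ur f r"]) (auto simp: ginv_def)
    next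
      case True
      then have rx: "r \<le> absv (f x)" unfolding Ur_def by auto
      have er: "e * r * r > 0" using e r by simp
      obtain U where U: "openin X U" "x \<in> U" "\<And>y. y \<in> U \<Longrightarrow> absv (f y - f x) < e * r * r"
        using contD[OF f x er] by blast
      show ?thesis
      proof (intro exI conjI ballI)
        show "openin X (U \<inter> Ur f r)" using U(1) UCO unfolding CO_def by auto
        show "x \<in> U \<inter> Ur f r" using U(2) True by auto
        fix y assume y: "y \<in> U \<inter> Ur f r"
        then have ry: "r \<le> absv (f y)" unfolding Ur_def by auto
        have fx0: "f x \<noteq> 0" and fy0: "f y \<noteq> 0" using rx ry r by auto
        have eq: "ginv f r y - ginv f r x = (f x - f y) * inverse (f y) * inverse (f x)"
          using y True fx0 fy0 by (simp add: ginv_def field_simps)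
        have "absv (ginv f r y - ginv f r x) = absv (f y - f x) * inverse (absv (f y)) * inverse (absv (f x))"
          unfolding eq using ab_sym[of "f x" "f y"] by simp
        also have "\<dots> \<le> absv (f y - f x) * inverse r * inverse r"
          using rx ry r by (intro mult_mono le_imp_inverse_le) auto
        also have "\<dots> < (e * r * r) * inverse r * inverse r"
          using U(3) y r by (intro mult_strict_right_mono) auto
        also have "\<dots> = e" using r by (simp add: field_simps)
        finally show "absv (ginv f r y - ginv f r x) < e" .
      qed
    qed
  qed
qed

definition supU :: "'a set \<Rightarrow> ('a \<Rightarrow> 'k) \<Rightarrow> real" where
  "supU U f = Sup (insert 0 ((\<lambda>x. absv (f x)) ` U))"

lemma supnorm_supU: "supnorm X absv f = supU T f"
  unfolding supnorm_def supU_def ..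

lemma supU_le: "0 \<le> c \<Longrightarrow> (\<And>x. x \<in> U \<Longrightarrow> absv (f x) \<le> c) \<Longrightarrow> supU U f \<le> c"
  unfolding supU_def by (rule cSup_least) auto

lemma supU_bdd:
  assumes f: "f \<in> Cbd X absv" and U: "U \<subseteq> T"
  shows "bdd_above (insert 0 ((\<lambda>x. absv (f x)) ` U))"
proof -
  obtain B where B: "B \<ge> 0" "\<forall>x\<in>T. absv (f x) \<le> B" using CbdD(2)[OF f] by blast
  show ?thesis unfolding bdd_above_def
    by (rule exI[of _ B]) (use B U in auto)
qed

lemma supU_upper:
  assumes f: "f \<in> Cbd X absv" and U: "U \<subseteq> T" and x: "x \<in> U"
  shows "absv (f x) \<le> supU U f"
  unfolding supU_def by (rule cSup_upper[OF _ supU_bdd[OF f U]]) (use x in auto)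

lemma supU_ge0:
  assumes f: "f \<in> Cbd X absv" and U: "U \<subseteq> T"
  shows "0 \<le> supU U f"
  unfolding supU_def by (rule cSup_upper[OF _ supU_bdd[OF f U]]) auto

section \<open>Properties of points of the spectrum\<close>

lemma BSCD0:
  assumes "p \<in> BSC X absv"
  shows "p \<in> extensional (Cbd X absv) \<and>
     (\<forall>f\<in>Cbd X absv. 0 \<le> p f) \<and>
     (\<forall>f\<in>Cbd X absv. \<forall>g\<in>Cbd X absv. p (\<lambda>x. f x * g x) = p f * p g) \<and>
     p (one_k X) = 1 \<and>
     (\<forall>f\<in>Cbd X absv. \<forall>g\<in>Cbd X absv. p (\<lambda>x. f x + g x) \<le> max (p f) (p g)) \<and>
     (\<forall>a. \<forall>f\<in>Cbd X absv. p (\<lambda>x. a * f x) = absv a * p f) \<and>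
     (\<forall>f\<in>Cbd X absv. p f \<le> supnorm X absv f)"
  using assms unfolding BSC_def mem_Collect_eq .

context
  fixes p assumes pB: "p \<in> BSC X absv"
begin

lemma P_ext: "p \<in> extensional (Cbd X absv)" using BSCD0[OF pB] by (rule conjunct1)
lemma P_nonneg: "f \<in> Cbd X absv \<Longrightarrow> 0 \<le> p f"
  using BSCD0[OF pB] by (elim conjE) (erule bspec)
lemma P_mult: "f \<in> Cbd X absv \<Longrightarrow> g \<in> Cbd X absv \<Longrightarrow> p (\<lambda>x. f x * g x) = p f * p g"
  using BSCD0[OF pB] by (elim conjE) (drule bspec, assumption, erule bspec)
lemma P_one: "p (one_k X) = 1"
  using BSCD0[OF pB] by (elim conjE)
lemma P_ultra: "f \<in> Cbd X absv \<Longrightarrow> g \<in> Cbd X absv \<Longrightarrow> p (\<lambda>x. f x + g x) \<le> max (p f) (p g)"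
  using BSCD0[OF pB] by (elim conjE) (drule bspec, assumption, erule bspec)
lemma P_scal: "f \<in> Cbd X absv \<Longrightarrow> p (\<lambda>x. a * f x) = absv a * p f"
  using BSCD0[OF pB] by (elim conjE) (drule spec, erule bspec)
lemma P_bound: "f \<in> Cbd X absv \<Longrightarrow> p f \<le> supnorm X absv f"
  using BSCD0[OF pB] by (elim conjE) (erule bspec)

lemma P_zero: "p (\<lambda>x. 0) = 0"
  using P_scal[OF one_Cbd, of 0] by simp

lemma char_idem: "(\<lambda>x. (char_k U x :: 'k) * char_k U x) = char_k U"
  by (rule ext) (simp add: char_k_def)

lemma P_char01: assumes U: "U \<in> CO X" shows "p (char_k U) = 0 \<or> p (char_k U) = 1"
proof -
  have "p (char_k U) = p (char_k U) * p (char_k U)"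
    using P_mult[OF char_Cbd[OF U] char_Cbd[OF U]] unfolding char_idem .
  then show ?thesis by (metis mult_cancel_right2 mult_eq_0_iff)
qed

lemma char_sum: "U \<subseteq> T \<Longrightarrow> (\<lambda>x. (char_k U x :: 'k) + char_k (T - U) x) = one_k X"
  by (rule ext) (auto simp: char_k_def one_k_def)

lemma char_disj: "(\<lambda>x. (char_k U x :: 'k) * char_k (T - U) x) = (\<lambda>x. 0)"
  by (rule ext) (auto simp: char_k_def)

lemma P_char_compl: assumes U: "U \<in> CO X"
  shows "p (char_k U) = 1 \<or> p (char_k (T - U)) = 1"
proof -
  have "1 \<le> max (p (char_k U)) (p (char_k (T - U)))"
    using P_ultra[OF char_Cbd[OF U] char_Cbd[OF CO_compl[OF U]]] char_sum[OF CO_sub[OF U]] P_one by simp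
  then show ?thesis using P_char01[OF U] P_char01[OF CO_compl[OF U]] by auto
qed

lemma P_char_disj: assumes U: "U \<in> CO X" and pU: "p (char_k U) = 1"
  shows "p (char_k (T - U)) = 0"
  using P_mult[OF char_Cbd[OF U] char_Cbd[OF CO_compl[OF U]]] char_disj[of U] P_zero pU by simp

lemma P_restrict:
  assumes U: "U \<in> CO X" and pU: "p (char_k U) = 1" and f: "f \<in> Cbd X absv"
  shows "p f \<le> supU U f"
proof -
  have "p f = p (\<lambda>x. f x * char_k U x)" using P_mult[OF f char_Cbd[OF U]] pU by simp
  also have "\<dots> \<le> supnorm X absv (\<lambda>x. f x * char_k U x)"
    by (rule P_bound[OF Cbd_mult[OF f char_Cbd[OF U]]])
  also have "\<dots> \<le> supU U f"
    unfolding supnorm_supU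
  proof (rule supU_le[OF supU_ge0[OF f CO_sub[OF U]]])
    fix x assume "x \<in> T"
    show "absv (f x * char_k U x) \<le> supU U f"
    proof (cases "x \<in> U")
      case True then show ?thesis using supU_upper[OF f CO_sub[OF U] True] by (simp add: char_k_def)
    next
      case False then show ?thesis using supU_ge0[OF f CO_sub[OF U]] by (simp add: char_k_def)
    qed
  qed
  finally show ?thesis .
qed

lemma P_lower:
  assumes r: "r > 0" and f: "f \<in> Cbd X absv" and pU: "p (char_k (Ur f r)) = 1"
  shows "r \<le> p f"
proof -
  have g: "ginv f r \<in> Cbd X absv" by (rule ginv_Cbd[OF f r])
  have "1 = p f * p (ginv f r)" using pU P_mult[OF f g] ginv_mult[OF r] by simp
  also have "\<dots> \<le> p f * inverse r"
  proof (rule mult_left_mono[OF _ P_nonneg[OF f]])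
    have "p (ginv f r) \<le> supnorm X absv (ginv f r)" by (rule P_bound[OF g])
    also have "\<dots> \<le> inverse r" unfolding supnorm_supU
      by (rule supU_le) (use r ginv_bound[OF r] in auto)
    finally show "p (ginv f r) \<le> inverse r" .
  qed
  finally have "1 \<le> p f * inverse r" .
  then show ?thesis using r by (simp add: field_simps)
qed

lemma P_thr_low:
  assumes f: "f \<in> Cbd X absv" and r: "0 < r" "r < p f"
  shows "p (char_k (Ur f r)) = 1"
proof (rule ccontr)
  assume "p (char_k (Ur f r)) \<noteq> 1"
  then have c: "p (char_k (T - Ur f r)) = 1" using P_char_compl[OF Ur_CO[OF f r(1)]] by auto
  have "p f \<le> supU (T - Ur f r) f" by (rule P_restrict[OF CO_compl[OF Ur_CO[OF f r(1)]] c f])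
  also have "\<dots> \<le> r" by (rule supU_le) (use r in \<open>auto simp: Ur_def\<close>)
  finally show False using r by simp
qed

lemma P_thr_up:
  assumes f: "f \<in> Cbd X absv" and s: "p f < s"
  shows "p (char_k (T - Ur f s)) = 1"
proof (rule ccontr)
  have s0: "s > 0" using s P_nonneg[OF f] by simp
  assume "p (char_k (T - Ur f s)) \<noteq> 1"
  then have "p (char_k (Ur f s)) = 1" using P_char_compl[OF Ur_CO[OF f s0]] by auto
  then have "s \<le> p f" by (rule P_lower[OF s0 f])
  then show False using s by simp
qed

end

section \<open>The ring and maximal ideals\<close>

lemma R_simps:
  "carrier (Cbd_ring X absv) = Cbd X absv"
  "f \<otimes>\<^bsub>Cbd_ring X absv\<^esub> g = (\<lambda>x. f x * g x)"
  "\<one>\<^bsub>Cbd_ring X absv\<^esub> = one_k X"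
  "\<zero>\<^bsub>Cbd_ring X absv\<^esub> = (\<lambda>x. 0)"
  "f \<oplus>\<^bsub>Cbd_ring X absv\<^esub> g = (\<lambda>x. f x + g x)"
  by (simp_all add: Cbd_ring_def)

lemma one_mult_r: "f \<in> Cbd X absv \<Longrightarrow> (\<lambda>x. f x * one_k X x) = f"
  using one_mult by (simp add: mult.commute)

lemma neg_Cbd: "f \<in> Cbd X absv \<Longrightarrow> (\<lambda>x. - f x) \<in> Cbd X absv"
  using scal_Cbd[of f "-1"] by simp

lemma R_ring: "ring (Cbd_ring X absv)"
proof (rule ringI)
  show "abelian_group (Cbd_ring X absv)"
  proof (rule abelian_groupI, unfold R_simps)
    show "\<And>x y. x \<in> Cbd X absv \<Longrightarrow> y \<in> Cbd X absv \<Longrightarrow> (\<lambda>a. x a + y a) \<in> Cbd X absv"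
      by (rule Cbd_add)
    show "(\<lambda>x. 0) \<in> Cbd X absv" by (rule zero_Cbd)
    show "\<And>x y z :: 'a \<Rightarrow> 'k. (\<lambda>a. (\<lambda>a. x a + y a) a + z a) = (\<lambda>a. x a + (\<lambda>a. y a + z a) a)"
      by (rule ext) (rule add.assoc)
    show "\<And>x y :: 'a \<Rightarrow> 'k. (\<lambda>a. x a + y a) = (\<lambda>a. y a + x a)" by (simp add: add.commute)
    show "\<And>x :: 'a \<Rightarrow> 'k. (\<lambda>a. 0 + x a) = x" by simp
    show "\<And>x. x \<in> Cbd X absv \<Longrightarrow> \<exists>y\<in>Cbd X absv. (\<lambda>a. y a + x a) = (\<lambda>x. 0)"
      by (rule bexI[OF _ neg_Cbd]) auto
  qed
  show "monoid (Cbd_ring X absv)"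
  proof (rule monoidI, unfold R_simps)
    show "\<And>x y. x \<in> Cbd X absv \<Longrightarrow> y \<in> Cbd X absv \<Longrightarrow> (\<lambda>a. x a * y a) \<in> Cbd X absv"
      by (rule Cbd_mult)
    show "one_k X \<in> Cbd X absv" by (rule one_Cbd)
    show "\<And>x y z :: 'a \<Rightarrow> 'k. (\<lambda>a. (\<lambda>a. x a * y a) a * z a) = (\<lambda>a. x a * (\<lambda>a. y a * z a) a)"
      by (rule ext) (rule mult.assoc)
    show "\<And>x. x \<in> Cbd X absv \<Longrightarrow> (\<lambda>a. one_k X a * x a) = x" by (rule one_mult)
    show "\<And>x. x \<in> Cbd X absv \<Longrightarrow> (\<lambda>a. x a * one_k X a) = x" by (rule one_mult_r)
  qed
  show "\<And>x y z. (x \<oplus>\<^bsub>Cbd_ring X absv\<^esub> y) \<otimes>\<^bsub>Cbd_ring X absv\<^esub> z =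
      x \<otimes>\<^bsub>Cbd_ring X absv\<^esub> z \<oplus>\<^bsub>Cbd_ring X absv\<^esub> y \<otimes>\<^bsub>Cbd_ring X absv\<^esub> z"
    unfolding R_simps by (simp add: algebra_simps)
  show "\<And>x y z. z \<otimes>\<^bsub>Cbd_ring X absv\<^esub> (x \<oplus>\<^bsub>Cbd_ring X absv\<^esub> y) =
      z \<otimes>\<^bsub>Cbd_ring X absv\<^esub> x \<oplus>\<^bsub>Cbd_ring X absv\<^esub> z \<otimes>\<^bsub>Cbd_ring X absv\<^esub> y"
    unfolding R_simps by (simp add: algebra_simps)
qed

lemma supp_maximal:
  assumes pB: "p \<in> BSC X absv"
  shows "maximalideal (supp X absv p) (Cbd_ring X absv)"
proof -
  interpret R: ring "Cbd_ring X absv" by (rule R_ring)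
  have supp_sub: "supp X absv p \<subseteq> Cbd X absv" unfolding supp_def by auto
  have lc: "x \<otimes>\<^bsub>Cbd_ring X absv\<^esub> a \<in> supp X absv p"
    if a: "a \<in> supp X absv p" and x: "x \<in> carrier (Cbd_ring X absv)" for a x
  proof -
    have aC: "a \<in> Cbd X absv" and pa: "p a = 0" using a unfolding supp_def by auto
    have xC: "x \<in> Cbd X absv" using x unfolding R_simps .
    show ?thesis unfolding R_simps supp_def
      using Cbd_mult[OF xC aC] P_mult[OF pB xC aC] pa by simp
  qed
  have rc: "a \<otimes>\<^bsub>Cbd_ring X absv\<^esub> x \<in> supp X absv p"
    if a: "a \<in> supp X absv p" and x: "x \<in> carrier (Cbd_ring X absv)" for a x
  proof -
    have "a \<otimes>\<^bsub>Cbd_ring X absv\<^esub> x = x \<otimes>\<^bsub>Cbd_ring X absv\<^esub> a"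
      unfolding R_simps by (simp add: mult.commute)
    then show ?thesis using lc[OF a x] by simp
  qed
  have ac: "a \<oplus>\<^bsub>Cbd_ring X absv\<^esub> b \<in> supp X absv p"
    if a: "a \<in> supp X absv p" and b: "b \<in> supp X absv p" for a b
  proof -
    have aC: "a \<in> Cbd X absv" and pa: "p a = 0" using a unfolding supp_def by auto
    have bC: "b \<in> Cbd X absv" and pb: "p b = 0" using b unfolding supp_def by auto
    have "p (\<lambda>x. a x + b x) \<le> 0" using P_ultra[OF pB aC bC] pa pb by simp
    moreover have "0 \<le> p (\<lambda>x. a x + b x)" by (rule P_nonneg[OF pB Cbd_add[OF aC bC]])
    ultimately show ?thesis unfolding R_simps supp_def using Cbd_add[OF aC bC] by simp
  qed
  have zero_in: "(\<lambda>x. 0) \<in> supp X absv p" unfolding supp_def using zero_Cbd P_zero[OF pB] by simp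
  have id: "ideal (supp X absv p) (Cbd_ring X absv)"
  proof (rule idealI[OF R_ring])
    show "subgroup (supp X absv p) (add_monoid (Cbd_ring X absv))"
    proof (rule R.add.subgroupI)
      show "supp X absv p \<subseteq> carrier (Cbd_ring X absv)" using supp_sub unfolding R_simps .
      show "supp X absv p \<noteq> {}" using zero_in by blast
      fix a assume a: "a \<in> supp X absv p"
      have aC: "a \<in> carrier (Cbd_ring X absv)" using a supp_sub unfolding R_simps by blast
      have "\<ominus>\<^bsub>Cbd_ring X absv\<^esub> a = (\<ominus>\<^bsub>Cbd_ring X absv\<^esub> \<one>\<^bsub>Cbd_ring X absv\<^esub>) \<otimes>\<^bsub>Cbd_ring X absv\<^esub> a"
        using R.l_minus[OF R.one_closed aC] aC by simp
      then show "\<ominus>\<^bsub>Cbd_ring X absv\<^esub> a \<in> supp X absv p"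
        using lc[OF a] R.a_inv_closed[OF R.one_closed] by simp
    next
      fix a b assume "a \<in> supp X absv p" "b \<in> supp X absv p"
      then show "a \<oplus>\<^bsub>Cbd_ring X absv\<^esub> b \<in> supp X absv p" by (rule ac)
    qed
  qed (auto intro: lc rc)
  show ?thesis
  proof (rule maximalidealI[OF id])
    have "one_k X \<notin> supp X absv p" unfolding supp_def using P_one[OF pB] by simp
    then show "carrier (Cbd_ring X absv) \<noteq> supp X absv p" using one_Cbd unfolding R_simps by blast
  next
    fix J assume J: "ideal J (Cbd_ring X absv)" "supp X absv p \<subseteq> J" "J \<subseteq> carrier (Cbd_ring X absv)"
    interpret J: ideal J "Cbd_ring X absv" by (rule J(1))
    show "J = supp X absv p \<or> J = carrier (Cbd_ring X absv)"
    proof (cases "J = supp X absv p")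
      case False
      then obtain f where fJ: "f \<in> J" and fn: "f \<notin> supp X absv p" using J(2) by blast
      have fC: "f \<in> Cbd X absv" using fJ J(3) unfolding R_simps by blast
      have pf: "p f > 0" using fn fC P_nonneg[OF pB fC] unfolding supp_def by auto
      define r where "r = p f / 2"
      have r: "0 < r" "r < p f" using pf unfolding r_def by auto
      have U1: "p (char_k (Ur f r)) = 1" by (rule P_thr_low[OF pB fC r])
      have UCO: "Ur f r \<in> CO X" by (rule Ur_CO[OF fC r(1)])
      have "p (char_k (T - Ur f r)) = 0" by (rule P_char_disj[OF pB UCO U1])
      then have c2: "char_k (T - Ur f r) \<in> J"
        using J(2) char_Cbd[OF CO_compl[OF UCO]] unfolding supp_def by blast
      have "f \<otimes>\<^bsub>Cbd_ring X absv\<^esub> ginv f r \<in> J"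
        by (rule J.I_r_closed[OF fJ]) (use ginv_Cbd[OF fC r(1)] in \<open>simp add: R_simps\<close>)
      then have c1: "char_k (Ur f r) \<in> J" unfolding R_simps ginv_mult[OF r(1)] .
      have "char_k (Ur f r) \<oplus>\<^bsub>Cbd_ring X absv\<^esub> char_k (T - Ur f r) \<in> J"
        by (rule J.a_closed[OF c1 c2])
      then have "\<one>\<^bsub>Cbd_ring X absv\<^esub> \<in> J"
        unfolding R_simps char_sum[OF pB CO_sub[OF UCO]] .
      then show ?thesis by (simp add: J.one_imp_carrier)
    qed simp
  qed
qed

section \<open>Ultrafilters\<close>

lemma UFD0:
  assumes "F \<in> UF X"
  shows "F \<subseteq> CO X \<and> {} \<notin> F \<and>
     (\<forall>U\<in>F. \<forall>V\<in>F. U \<inter> V \<in> F) \<and>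
     (\<forall>U\<in>CO X. \<forall>V\<in>F. U \<union> V \<in> F) \<and>
     (\<forall>U\<in>CO X. U \<in> F \<or> T - U \<in> F)"
  using assms unfolding UF_def mem_Collect_eq .

lemma UFI:
  assumes "F \<subseteq> CO X" "{} \<notin> F" "\<And>U V. U \<in> F \<Longrightarrow> V \<in> F \<Longrightarrow> U \<inter> V \<in> F"
    "\<And>U V. U \<in> CO X \<Longrightarrow> V \<in> F \<Longrightarrow> U \<union> V \<in> F"
    "\<And>U. U \<in> CO X \<Longrightarrow> U \<in> F \<or> T - U \<in> F"
  shows "F \<in> UF X"
  unfolding UF_def mem_Collect_eq using assms by blast

context
  fixes F assumes FU: "F \<in> UF X"
begin

lemma UF_CO: "U \<in> F \<Longrightarrow> U \<in> CO X" using UFD0[OF FU] by blast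
lemma UF_ne: "U \<in> F \<Longrightarrow> U \<noteq> {}" using UFD0[OF FU] by blast
lemma UF_int: "U \<in> F \<Longrightarrow> V \<in> F \<Longrightarrow> U \<inter> V \<in> F" using UFD0[OF FU] by blast
lemma UF_un: "U \<in> CO X \<Longrightarrow> V \<in> F \<Longrightarrow> U \<union> V \<in> F" using UFD0[OF FU] by blast
lemma UF_compl: "U \<in> CO X \<Longrightarrow> U \<in> F \<or> T - U \<in> F" using UFD0[OF FU] by blast
lemma UF_sup: "V \<in> F \<Longrightarrow> U \<in> CO X \<Longrightarrow> V \<subseteq> U \<Longrightarrow> U \<in> F"
  using UF_un[of U V] by (simp add: Un_absorb2)
lemma UF_top: "T \<in> F"
  using UF_compl[OF CO_empty] UF_ne by auto
lemma UF_sub: "U \<in> F \<Longrightarrow> U \<subseteq> T" using UF_CO CO_sub by blast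

end

definition pF :: "'a set set \<Rightarrow> ('a \<Rightarrow> 'k) \<Rightarrow> real" where
  "pF F f = (if f \<in> Cbd X absv then Inf ((\<lambda>U. supU U f) ` F) else undefined)"

context
  fixes F assumes FU: "F \<in> UF X"
begin

lemma pF_bdd: "f \<in> Cbd X absv \<Longrightarrow> bdd_below ((\<lambda>U. supU U f) ` F)"
  unfolding bdd_below_def using supU_ge0 UF_sub[OF FU] by blast

lemma pF_le: "f \<in> Cbd X absv \<Longrightarrow> U \<in> F \<Longrightarrow> pF F f \<le> supU U f"
  unfolding pF_def by (simp add: cInf_lower pF_bdd)

lemma pF_ge: "f \<in> Cbd X absv \<Longrightarrow> (\<And>U. U \<in> F \<Longrightarrow> c \<le> supU U f) \<Longrightarrow> c \<le> pF F f"
  unfolding pF_def using UF_top[OF FU] by (auto intro!: cInf_greatest)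

lemma pF_nonneg: assumes f: "f \<in> Cbd X absv" shows "0 \<le> pF F f"
proof (rule pF_ge[OF f])
  fix U assume "U \<in> F" then show "0 \<le> supU U f" by (rule supU_ge0[OF f UF_sub[OF FU]])
qed

lemma pF_low:
  assumes f: "f \<in> Cbd X absv" and r: "0 < r" and U: "Ur f r \<in> F"
  shows "r \<le> pF F f"
proof (rule pF_ge[OF f])
  fix V assume V: "V \<in> F"
  have "V \<inter> Ur f r \<noteq> {}" using UF_ne[OF FU UF_int[OF FU V U]] .
  then obtain x where x: "x \<in> V" "x \<in> Ur f r" by blast
  have "r \<le> absv (f x)" using x(2) unfolding Ur_def by simp
  also have "\<dots> \<le> supU V f" by (rule supU_upper[OF f UF_sub[OF FU V] x(1)])
  finally show "r \<le> supU V f" .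
qed

lemma pF_up:
  assumes f: "f \<in> Cbd X absv" and s: "0 \<le> s" and V: "T - Ur f s \<in> F"
  shows "pF F f \<le> s"
proof -
  have "pF F f \<le> supU (T - Ur f s) f" by (rule pF_le[OF f V])
  also have "\<dots> \<le> s" by (rule supU_le[OF s]) (auto simp: Ur_def)
  finally show ?thesis .
qed

lemma pF_thr_low:
  assumes f: "f \<in> Cbd X absv" and r: "0 < r" "r < pF F f"
  shows "Ur f r \<in> F"
proof (rule ccontr)
  assume "Ur f r \<notin> F"
  then have "T - Ur f r \<in> F" using UF_compl[OF FU Ur_CO[OF f r(1)]] by blast
  then have "pF F f \<le> r" by (rule pF_up[OF f less_imp_le[OF r(1)]])
  then show False using r by simp
qed

lemma pF_thr_up:
  assumes f: "f \<in> Cbd X absv" and s: "pF F f < s"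
  shows "T - Ur f s \<in> F"
proof (rule ccontr)
  have s0: "0 < s" using s pF_nonneg[OF f] by simp
  assume "T - Ur f s \<notin> F"
  then have "Ur f s \<in> F" using UF_compl[OF FU Ur_CO[OF f s0]] by blast
  then have "s \<le> pF F f" by (rule pF_low[OF f s0])
  then show False using s by simp
qed

lemma pF_const: "pF F (\<lambda>x. a * one_k X x) = absv a"
proof (rule antisym)
  have "pF F (\<lambda>x. a * one_k X x) \<le> supU T (\<lambda>x. a * one_k X x)"
    by (rule pF_le[OF const_Cbd UF_top[OF FU]])
  also have "\<dots> \<le> absv a" by (rule supU_le) (auto simp: one_k_def)
  finally show "pF F (\<lambda>x. a * one_k X x) \<le> absv a" .
  show "absv a \<le> pF F (\<lambda>x. a * one_k X x)"
  proof (rule pF_ge[OF const_Cbd])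
    fix U assume U: "U \<in> F"
    then obtain x where x: "x \<in> U" using UF_ne[OF FU U] by blast
    have "absv (a * one_k X x) \<le> supU U (\<lambda>x. a * one_k X x)"
      by (rule supU_upper[OF const_Cbd UF_sub[OF FU U] x])
    moreover have "x \<in> T" using UF_sub[OF FU U] x by blast
    ultimately show "absv a \<le> supU U (\<lambda>x. a * one_k X x)" by (simp add: one_k_def)
  qed
qed

lemma pF_one: "pF F (one_k X) = 1"
  using pF_const[of 1] by simp

lemma pF_ultra:
  assumes f: "f \<in> Cbd X absv" and g: "g \<in> Cbd X absv"
  shows "pF F (\<lambda>x. f x + g x) \<le> max (pF F f) (pF F g)"
proof (rule dense_ge)
  fix y assume y: "max (pF F f) (pF F g) < y"
  have y0: "0 < y" using y pF_nonneg[OF f] by simp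
  have "(T - Ur f y) \<inter> (T - Ur g y) \<in> F"
    using UF_int[OF FU pF_thr_up[OF f] pF_thr_up[OF g]] y by simp
  moreover have "(T - Ur f y) \<inter> (T - Ur g y) \<subseteq> T - Ur (\<lambda>x. f x + g x) y"
  proof
    fix x assume "x \<in> (T - Ur f y) \<inter> (T - Ur g y)"
    then have "x \<in> T" "absv (f x) < y" "absv (g x) < y" unfolding Ur_def by auto
    then show "x \<in> T - Ur (\<lambda>x. f x + g x) y"
      using ab_ultra[of "f x" "g x"] unfolding Ur_def by auto
  qed
  ultimately have "T - Ur (\<lambda>x. f x + g x) y \<in> F"
    using UF_sup[OF FU] CO_compl[OF Ur_CO[OF Cbd_add[OF f g] y0]] by blast
  then show "pF F (\<lambda>x. f x + g x) \<le> y" by (rule pF_up[OF Cbd_add[OF f g] less_imp_le[OF y0]])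
qed

lemma pF_mult_le:
  assumes f: "f \<in> Cbd X absv" and g: "g \<in> Cbd X absv"
  shows "pF F (\<lambda>x. f x * g x) \<le> pF F f * pF F g"
proof (rule dense_ge)
  fix y assume y: "pF F f * pF F g < y"
  define a where "a = pF F f"
  define b where "b = pF F g"
  have a0: "0 \<le> a" and b0: "0 \<le> b" unfolding a_def b_def using pF_nonneg f g by auto
  define d where "d = min 1 ((y - a * b) / (2 * (a + b + 1)))"
  have d0: "0 < d" using y a0 b0 unfolding d_def a_def[symmetric] b_def[symmetric] by auto
  have d1: "d \<le> 1" unfolding d_def by simp
  have d2: "d * (a + b + 1) \<le> (y - a * b) / 2"
  proof -
    have "d \<le> (y - a * b) / (2 * (a + b + 1))" unfolding d_def by simp
    then have "d * (a + b + 1) \<le> (y - a * b) / (2 * (a + b + 1)) * (a + b + 1)"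
      using a0 b0 by (intro mult_right_mono) auto
    also have "\<dots> = (y - a * b) / 2" using a0 b0 by (simp add: field_simps)
    finally show ?thesis .
  qed
  have dd: "d * d \<le> d" using d0 d1 by (simp add: mult_le_cancel_left1)
  have key: "(a + d) * (b + d) < y"
  proof -
    have "(a + d) * (b + d) = a * b + d * (a + b) + d * d" by (simp add: algebra_simps)
    also have "\<dots> \<le> a * b + d * (a + b + 1)" using dd by (simp add: algebra_simps)
    also have "\<dots> \<le> a * b + (y - a * b) / 2" using d2 by simp
    also have "\<dots> < y" using y unfolding a_def[symmetric] b_def[symmetric] by (simp add: field_simps)
    finally show ?thesis .
  qed
  define s1 where "s1 = a + d"
  define s2 where "s2 = b + d"
  have s1: "pF F f < s1" "0 < s1" unfolding s1_def a_def using d0 a0 a_def by auto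
  have s2: "pF F g < s2" "0 < s2" unfolding s2_def b_def using d0 b0 b_def by auto
  have s12: "0 < s1 * s2" using s1 s2 by simp
  have "(T - Ur f s1) \<inter> (T - Ur g s2) \<in> F"
    using UF_int[OF FU pF_thr_up[OF f s1(1)] pF_thr_up[OF g s2(1)]] .
  moreover have "(T - Ur f s1) \<inter> (T - Ur g s2) \<subseteq> T - Ur (\<lambda>x. f x * g x) (s1 * s2)"
  proof
    fix x assume "x \<in> (T - Ur f s1) \<inter> (T - Ur g s2)"
    then have x: "x \<in> T" "absv (f x) < s1" "absv (g x) < s2" unfolding Ur_def by auto
    have "absv (f x) * absv (g x) < s1 * s2"
      by (rule mult_strict_mono) (use x s1 in auto)
    then show "x \<in> T - Ur (\<lambda>x. f x * g x) (s1 * s2)" using x unfolding Ur_def by auto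
  qed
  ultimately have "T - Ur (\<lambda>x. f x * g x) (s1 * s2) \<in> F"
    using UF_sup[OF FU] CO_compl[OF Ur_CO[OF Cbd_mult[OF f g] s12]] by blast
  then have "pF F (\<lambda>x. f x * g x) \<le> s1 * s2"
    by (rule pF_up[OF Cbd_mult[OF f g] less_imp_le[OF s12]])
  also have "\<dots> \<le> y" using key unfolding s1_def s2_def by simp
  finally show "pF F (\<lambda>x. f x * g x) \<le> y" .
qed

lemma pF_mult_ge:
  assumes f: "f \<in> Cbd X absv" and g: "g \<in> Cbd X absv"
  shows "pF F f * pF F g \<le> pF F (\<lambda>x. f x * g x)"
proof (rule dense_le)
  fix y assume y: "y < pF F f * pF F g"
  define a where "a = pF F f"
  define b where "b = pF F g"
  have a0: "0 \<le> a" and b0: "0 \<le> b" unfolding a_def b_def using pF_nonneg f g by auto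
  show "y \<le> pF F (\<lambda>x. f x * g x)"
  proof (cases "y \<le> 0")
    case True then show ?thesis using pF_nonneg[OF Cbd_mult[OF f g]] by simp
  next
    case False
    then have y0: "0 < y" by simp
    have ab: "y < a * b" using y unfolding a_def b_def .
    then have a1: "0 < a" and b1: "0 < b" using a0 b0 y0
      by (metis mult_eq_0_iff order_le_less not_less_iff_gr_or_eq)+
    define t where "t = sqrt (y / (a * b))"
    have q: "0 < y / (a * b)" "y / (a * b) < 1" using y0 ab a1 b1 by auto
    have t: "0 < t" "t < 1" unfolding t_def using q by auto
    have tt: "t * t = y / (a * b)" unfolding t_def by (metis abs_of_pos q(1) real_sqrt_mult_self)
    define r1 where "r1 = t * a"
    define r2 where "r2 = t * b"
    have r1: "0 < r1" "r1 < pF F f" unfolding r1_def using t a1 a_def by auto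
    have r2: "0 < r2" "r2 < pF F g" unfolding r2_def using t b1 b_def by auto
    have r12: "r1 * r2 = y" unfolding r1_def r2_def
    proof -
      have "t * a * (t * b) = (t * t) * (a * b)" by (simp add: algebra_simps)
      also have "\<dots> = y" using tt a1 b1 by simp
      finally show "t * a * (t * b) = y" .
    qed
    have "Ur f r1 \<inter> Ur g r2 \<in> F"
      using UF_int[OF FU pF_thr_low[OF f r1] pF_thr_low[OF g r2]] .
    moreover have "Ur f r1 \<inter> Ur g r2 \<subseteq> Ur (\<lambda>x. f x * g x) y"
    proof
      fix x assume "x \<in> Ur f r1 \<inter> Ur g r2"
      then have x: "x \<in> T" "r1 \<le> absv (f x)" "r2 \<le> absv (g x)" unfolding Ur_def by auto
      have "r1 * r2 \<le> absv (f x) * absv (g x)"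
        by (rule mult_mono) (use x r1 r2 in auto)
      then show "x \<in> Ur (\<lambda>x. f x * g x) y" using x r12 unfolding Ur_def by auto
    qed
    ultimately have "Ur (\<lambda>x. f x * g x) y \<in> F"
      using UF_sup[OF FU] Ur_CO[OF Cbd_mult[OF f g] y0] by blast
    then show ?thesis by (rule pF_low[OF Cbd_mult[OF f g] y0])
  qed
qed

lemma pF_BSC: "pF F \<in> BSC X absv"
  unfolding BSC_def mem_Collect_eq
proof (intro conjI ballI allI)
  show "pF F \<in> extensional (Cbd X absv)" unfolding extensional_def pF_def by simp
  show "\<And>f. f \<in> Cbd X absv \<Longrightarrow> 0 \<le> pF F f" by (rule pF_nonneg)
  show "\<And>f g. f \<in> Cbd X absv \<Longrightarrow> g \<in> Cbd X absv \<Longrightarrow> pF F (\<lambda>x. f x * g x) = pF F f * pF F g"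
    using pF_mult_le pF_mult_ge by (blast intro: antisym)
  show "pF F (one_k X) = 1" by (rule pF_one)
  show "\<And>f g. f \<in> Cbd X absv \<Longrightarrow> g \<in> Cbd X absv \<Longrightarrow> pF F (\<lambda>x. f x + g x) \<le> max (pF F f) (pF F g)"
    by (rule pF_ultra)
  show "\<And>f. f \<in> Cbd X absv \<Longrightarrow> pF F f \<le> supnorm X absv f"
    unfolding supnorm_supU by (rule pF_le[OF _ UF_top[OF FU]])
  fix a and f assume f: "f \<in> Cbd X absv"
  have "pF F (\<lambda>x. a * f x) = pF F (\<lambda>x. (a * one_k X x) * f x)" using scal_eq[OF f, of a] by simp
  also have "\<dots> = pF F (\<lambda>x. a * one_k X x) * pF F f"
    using pF_mult_le[OF const_Cbd f] pF_mult_ge[OF const_Cbd f] by (rule antisym)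
  also have "\<dots> = absv a * pF F f" by (simp add: pF_const)
  finally show "pF F (\<lambda>x. a * f x) = absv a * pF F f" .
qed

lemma Fsupp_pF: "Fsupp X absv (pF F) = F"
proof -
  have "U \<in> Fsupp X absv (pF F) \<longleftrightarrow> U \<in> F" for U
  proof (cases "U \<in> CO X")
    case False then show ?thesis unfolding Fsupp_def using UF_CO[OF FU] by blast
  next
    case U: True
    have cU: "char_k U \<in> Cbd X absv" by (rule char_Cbd[OF U])
    have "pF F (char_k U) \<noteq> 0 \<longleftrightarrow> U \<in> F"
    proof
      assume "U \<in> F"
      moreover have "Ur (char_k U) 1 = U" using CO_sub[OF U] unfolding Ur_def char_k_def by auto
      ultimately have "1 \<le> pF F (char_k U)" using pF_low[OF cU, of 1] by simp
      then show "pF F (char_k U) \<noteq> 0" by auto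
    next
      assume "pF F (char_k U) \<noteq> 0"
      show "U \<in> F"
      proof (rule ccontr)
        assume "U \<notin> F"
        then have V: "T - U \<in> F" using UF_compl[OF FU U] by blast
        have "pF F (char_k U) \<le> supU (T - U) (char_k U)" by (rule pF_le[OF cU V])
        also have "\<dots> \<le> 0" by (rule supU_le) (auto simp: char_k_def)
        finally show False using pF_nonneg[OF cU] \<open>pF F (char_k U) \<noteq> 0\<close> by simp
      qed
    qed
    then show ?thesis unfolding Fsupp_def supp_def using U cU by auto
  qed
  then show ?thesis by blast
qed

end

section \<open>The bijection\<close>

lemma char_inter: "char_k (U \<inter> V) = (\<lambda>x. (char_k U x :: 'k) * char_k V x)"
  by (rule ext) (simp add: char_k_def)

lemma char_empty: "(char_k {} :: 'a \<Rightarrow> 'k) = (\<lambda>x. 0)"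
  by (rule ext) (simp add: char_k_def)

context
  fixes p assumes pB: "p \<in> BSC X absv"
begin

lemma Fsupp_iff: "U \<in> Fsupp X absv p \<longleftrightarrow> U \<in> CO X \<and> p (char_k U) = 1"
proof
  assume "U \<in> Fsupp X absv p"
  then have U: "U \<in> CO X" and n: "char_k U \<notin> supp X absv p" unfolding Fsupp_def by auto
  have "p (char_k U) \<noteq> 0" using n char_Cbd[OF U] unfolding supp_def by simp
  then show "U \<in> CO X \<and> p (char_k U) = 1" using U P_char01[OF pB U] by simp
next
  assume h: "U \<in> CO X \<and> p (char_k U) = 1"
  then have "char_k U \<notin> supp X absv p" unfolding supp_def by simp
  then show "U \<in> Fsupp X absv p" using h unfolding Fsupp_def by simp
qed

lemma Fsupp_UF: "Fsupp X absv p \<in> UF X"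
proof (rule UFI)
  show "Fsupp X absv p \<subseteq> CO X" using Fsupp_iff by blast
  show "{} \<notin> Fsupp X absv p" using Fsupp_iff char_empty P_zero[OF pB] by simp
  fix U V
  show "U \<in> Fsupp X absv p \<Longrightarrow> V \<in> Fsupp X absv p \<Longrightarrow> U \<inter> V \<in> Fsupp X absv p"
  proof -
    assume "U \<in> Fsupp X absv p" "V \<in> Fsupp X absv p"
    then have U: "U \<in> CO X" "p (char_k U) = 1" and V: "V \<in> CO X" "p (char_k V) = 1"
      using Fsupp_iff by auto
    have "p (char_k (U \<inter> V)) = 1"
      unfolding char_inter P_mult[OF pB char_Cbd[OF U(1)] char_Cbd[OF V(1)]] using U V by simp
    then show ?thesis using Fsupp_iff CO_inter[OF U(1) V(1)] by blast
  qed
  show "U \<in> CO X \<Longrightarrow> V \<in> Fsupp X absv p \<Longrightarrow> U \<union> V \<in> Fsupp X absv p"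
  proof -
    assume U: "U \<in> CO X" and V: "V \<in> Fsupp X absv p"
    then have VC: "V \<in> CO X" and pV: "p (char_k V) = 1" using Fsupp_iff by auto
    have UV: "U \<union> V \<in> CO X" by (rule CO_union[OF U VC])
    have "(\<lambda>x. (char_k V x :: 'k) * char_k (U \<union> V) x) = char_k V"
      by (rule ext) (simp add: char_k_def)
    then have "p (char_k V) = p (char_k V) * p (char_k (U \<union> V))"
      using P_mult[OF pB char_Cbd[OF VC] char_Cbd[OF UV]] by simp
    then have "p (char_k (U \<union> V)) = 1" using pV by simp
    then show ?thesis using UV Fsupp_iff by blast
  qed
  show "U \<in> CO X \<Longrightarrow> U \<in> Fsupp X absv p \<or> T - U \<in> Fsupp X absv p"
  proof -
    assume U: "U \<in> CO X"
    then show ?thesis using P_char_compl[OF pB U] CO_compl[OF U] Fsupp_iff by simp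
  qed
qed

lemma pF_Fsupp: "pF (Fsupp X absv p) = p"
proof
  fix f
  have FU: "Fsupp X absv p \<in> UF X" by (rule Fsupp_UF)
  show "pF (Fsupp X absv p) f = p f"
  proof (cases "f \<in> Cbd X absv")
    case False
    then show ?thesis using P_ext[OF pB] unfolding pF_def extensional_def by simp
  next
    case f: True
    show ?thesis
    proof (rule antisym)
      show "pF (Fsupp X absv p) f \<le> p f"
      proof (rule dense_ge)
        fix y assume y: "p f < y"
        have y0: "0 < y" using y P_nonneg[OF pB f] by simp
        have "T - Ur f y \<in> Fsupp X absv p"
          using Fsupp_iff P_thr_up[OF pB f y] CO_compl[OF Ur_CO[OF f y0]] by blast
        then show "pF (Fsupp X absv p) f \<le> y" by (rule pF_up[OF FU f less_imp_le[OF y0]])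
      qed
      show "p f \<le> pF (Fsupp X absv p) f"
      proof (rule pF_ge[OF FU f])
        fix U assume "U \<in> Fsupp X absv p"
        then have "U \<in> CO X" "p (char_k U) = 1" using Fsupp_iff by auto
        then show "p f \<le> supU U f" using P_restrict[OF pB _ _ f] by blast
      qed
    qed
  qed
qed

end

section \<open>Topologies\<close>

definition UFopen :: "'a set set set \<Rightarrow> bool" where
  "UFopen S \<longleftrightarrow> S \<subseteq> UF X \<and> (\<forall>F\<in>S. \<exists>U\<in>CO X. U \<in> F \<and> {G\<in>UF X. U \<in> G} \<subseteq> S)"

lemma UF_istop: "istopology UFopen"
  unfolding istopology_def
proof (intro conjI allI impI)
  fix S S' assume S: "UFopen S" and S': "UFopen S'"
  show "UFopen (S \<inter> S')" unfolding UFopen_def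
  proof (intro conjI ballI)
    show "S \<inter> S' \<subseteq> UF X" using S unfolding UFopen_def by blast
    fix F assume F: "F \<in> S \<inter> S'"
    obtain U where U: "U \<in> CO X" "U \<in> F" "{G\<in>UF X. U \<in> G} \<subseteq> S" using S F unfolding UFopen_def by blast
    obtain V where V: "V \<in> CO X" "V \<in> F" "{G\<in>UF X. V \<in> G} \<subseteq> S'" using S' F unfolding UFopen_def by blast
    have FU: "F \<in> UF X" using S F unfolding UFopen_def by blast
    show "\<exists>W\<in>CO X. W \<in> F \<and> {G\<in>UF X. W \<in> G} \<subseteq> S \<inter> S'"
    proof (intro bexI conjI)
      show "U \<inter> V \<in> CO X" by (rule CO_inter[OF U(1) V(1)])
      show "U \<inter> V \<in> F" by (rule UF_int[OF FU U(2) V(2)])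
      show "{G\<in>UF X. U \<inter> V \<in> G} \<subseteq> S \<inter> S'"
      proof
        fix G assume G: "G \<in> {G\<in>UF X. U \<inter> V \<in> G}"
        then have GU: "G \<in> UF X" and "U \<inter> V \<in> G" by auto
        then have "U \<in> G" "V \<in> G" using UF_sup[OF GU _ U(1)] UF_sup[OF GU _ V(1)] by auto
        then show "G \<in> S \<inter> S'" using GU U(3) V(3) by blast
      qed
    qed
  qed
next
  fix K assume K: "\<forall>S\<in>K. UFopen S"
  show "UFopen (\<Union>K)" unfolding UFopen_def
  proof (intro conjI ballI)
    show "\<Union>K \<subseteq> UF X" using K unfolding UFopen_def by blast
    fix F assume "F \<in> \<Union>K"
    then obtain S where S: "S \<in> K" "F \<in> S" by blast
    then obtain U where "U \<in> CO X" "U \<in> F" "{G\<in>UF X. U \<in> G} \<subseteq> S" using K unfolding UFopen_def by blast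
    then show "\<exists>U\<in>CO X. U \<in> F \<and> {G\<in>UF X. U \<in> G} \<subseteq> \<Union>K" using S by blast
  qed
qed

lemma openin_UF: "openin (UF_top X) = UFopen"
proof -
  have "UF_top X = topology UFopen" unfolding UF_top_def UFopen_def ..
  then show ?thesis using UF_istop by simp
qed

lemma topspace_UF: "topspace (UF_top X) = UF X"
proof
  show "topspace (UF_top X) \<subseteq> UF X"
    unfolding topspace_def openin_UF UFopen_def by blast
  have "UFopen (UF X)" unfolding UFopen_def using CO_top UF_top by blast
  then show "UF X \<subseteq> topspace (UF_top X)" unfolding topspace_def openin_UF by blast
qed

lemma topspace_BSC: "topspace (BSC_top X absv) = BSC X absv"
proof -
  have "BSC X absv \<subseteq> (\<Pi>\<^sub>E i\<in>Cbd X absv. UNIV)"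
  proof
    fix p assume "p \<in> BSC X absv"
    then have "p \<in> extensional (Cbd X absv)" by (rule P_ext)
    then show "p \<in> (\<Pi>\<^sub>E i\<in>Cbd X absv. UNIV)" unfolding PiE_def by simp
  qed
  then show ?thesis unfolding BSC_top_def topspace_subtopology topspace_product_topology topspace_euclidean
    by blast
qed

lemma proj_cont: assumes f: "f \<in> Cbd X absv" shows "continuous_map (BSC_top X absv) euclideanreal (\<lambda>q. q f)"
proof -
  have "continuous_map (product_topology (\<lambda>f. euclideanreal) (Cbd X absv)) ((\<lambda>f. euclideanreal) f) (\<lambda>q. q f)"
    by (rule continuous_map_product_projection[OF f])
  then have "continuous_map (product_topology (\<lambda>f. euclideanreal) (Cbd X absv)) euclideanreal (\<lambda>q. q f)"
    by (simp only:)
  then show ?thesis unfolding BSC_top_def by (rule continuous_map_from_subtopology)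
qed

lemma Fsupp_cont: "continuous_map (BSC_top X absv) (UF_top X) (Fsupp X absv)"
  unfolding continuous_map
proof (intro conjI allI impI)
  show "Fsupp X absv ` topspace (BSC_top X absv) \<subseteq> topspace (UF_top X)"
    unfolding topspace_BSC topspace_UF using Fsupp_UF by (rule image_subsetI)
  fix S assume S: "openin (UF_top X) S"
  show "openin (BSC_top X absv) {x \<in> topspace (BSC_top X absv). Fsupp X absv x \<in> S}"
  proof (subst openin_subopen, intro ballI)
    fix p assume p: "p \<in> {x \<in> topspace (BSC_top X absv). Fsupp X absv x \<in> S}"
    then have pB: "p \<in> BSC X absv" and pS: "Fsupp X absv p \<in> S" unfolding topspace_BSC by auto
    obtain U where U: "U \<in> CO X" "U \<in> Fsupp X absv p" "{G\<in>UF X. U \<in> G} \<subseteq> S"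
      using S pS unfolding openin_UF UFopen_def by (elim conjE) (drule bspec, assumption, elim bexE conjE, blast)
    define W where "W = {q \<in> topspace (BSC_top X absv). q (char_k U) \<in> {1/2<..}}"
    have "openin euclideanreal {(1::real)/2<..}" using open_greaterThan[of "(1::real)/2"] by simp
    then have Wo: "openin (BSC_top X absv) W"
      unfolding W_def by (rule openin_continuous_map_preimage[OF proj_cont[OF char_Cbd[OF U(1)]]])
    have pU1: "p (char_k U) = 1" using U(2) unfolding Fsupp_iff[OF pB] by (rule conjunct2)
    have pW: "p \<in> W" unfolding W_def topspace_BSC using pB pU1 by simp
    have "W \<subseteq> {x \<in> topspace (BSC_top X absv). Fsupp X absv x \<in> S}"
    proof
      fix q assume q: "q \<in> W"
      then have qB: "q \<in> BSC X absv" and qU: "q (char_k U) > 1/2" unfolding W_def topspace_BSC by auto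
      have "q (char_k U) = 1" using P_char01[OF qB U(1)] qU by auto
      then have "U \<in> Fsupp X absv q" using Fsupp_iff[OF qB] U(1) by blast
      then have "Fsupp X absv q \<in> S" using U(3) Fsupp_UF[OF qB] by blast
      then show "q \<in> {x \<in> topspace (BSC_top X absv). Fsupp X absv x \<in> S}"
        using qB unfolding topspace_BSC by blast
    qed
    then show "\<exists>T. openin (BSC_top X absv) T \<and> p \<in> T \<and> T \<subseteq> {x \<in> topspace (BSC_top X absv). Fsupp X absv x \<in> S}"
      using Wo pW by blast
  qed
qed

lemma pF_comp_cont:
  assumes f: "f \<in> Cbd X absv"
  shows "continuous_map (UF_top X) euclideanreal (\<lambda>F. pF F f)"
  unfolding continuous_map
proof (intro conjI allI impI)
  show "(\<lambda>F. pF F f) ` topspace (UF_top X) \<subseteq> topspace euclideanreal" by simp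
  fix W :: "real set" assume "openin euclideanreal W"
  then have Wo: "open W" by simp
  show "openin (UF_top X) {x \<in> topspace (UF_top X). pF x f \<in> W}"
    unfolding openin_UF UFopen_def topspace_UF
  proof (intro conjI ballI)
    show "{x \<in> UF X. pF x f \<in> W} \<subseteq> UF X" by blast
    fix F0 assume F0: "F0 \<in> {x \<in> UF X. pF x f \<in> W}"
    then have F0U: "F0 \<in> UF X" and cW: "pF F0 f \<in> W" by auto
    define c where "c = pF F0 f"
    obtain e where e: "e > 0" "\<And>x'. \<bar>x' - c\<bar> < e \<Longrightarrow> x' \<in> W"
      using Wo cW unfolding open_real c_def by blast
    define s where "s = c + e / 2"
    have c0: "0 \<le> c" unfolding c_def by (rule pF_nonneg[OF F0U f])
    have s: "c < s" "0 < s" unfolding s_def using e c0 by auto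
    have V: "T - Ur f s \<in> F0" using pF_thr_up[OF F0U f] s(1) unfolding c_def by blast
    have VCO: "T - Ur f s \<in> CO X" by (rule CO_compl[OF Ur_CO[OF f s(2)]])
    show "\<exists>U\<in>CO X. U \<in> F0 \<and> {G \<in> UF X. U \<in> G} \<subseteq> {x \<in> UF X. pF x f \<in> W}"
    proof (cases "c > 0")
      case False
      then have c00: "c = 0" using c0 by simp
      show ?thesis
      proof (intro bexI[OF _ VCO] conjI V subsetI)
        fix G assume "G \<in> {G \<in> UF X. T - Ur f s \<in> G}"
        then have GU: "G \<in> UF X" and GV: "T - Ur f s \<in> G" by auto
        have "pF G f \<le> s" by (rule pF_up[OF GU f less_imp_le[OF s(2)] GV])
        moreover have "0 \<le> pF G f" by (rule pF_nonneg[OF GU f])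
        ultimately have "\<bar>pF G f - c\<bar> < e" using c00 e(1) unfolding s_def by simp
        then show "G \<in> {x \<in> UF X. pF x f \<in> W}" using e(2) GU by blast
      qed
    next
      case True
      define r where "r = c - min c e / 2"
      have r: "0 < r" "r < c" "c - r < e" unfolding r_def using True e by (auto simp: min_def)
      have Ur: "Ur f r \<in> F0" using pF_thr_low[OF F0U f r(1)] r(2) unfolding c_def by blast
      have UrCO: "Ur f r \<in> CO X" by (rule Ur_CO[OF f r(1)])
      show ?thesis
      proof (intro bexI[OF _ CO_inter[OF UrCO VCO]] conjI UF_int[OF F0U Ur V] subsetI)
        fix G assume "G \<in> {G \<in> UF X. Ur f r \<inter> (T - Ur f s) \<in> G}"
        then have GU: "G \<in> UF X" and GV: "Ur f r \<inter> (T - Ur f s) \<in> G" by auto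
        have G1: "Ur f r \<in> G" using UF_sup[OF GU GV UrCO] by blast
        have G2: "T - Ur f s \<in> G" using UF_sup[OF GU GV VCO] by blast
        have "pF G f \<le> s" by (rule pF_up[OF GU f less_imp_le[OF s(2)] G2])
        moreover have "r \<le> pF G f" by (rule pF_low[OF GU f r(1) G1])
        ultimately have "\<bar>pF G f - c\<bar> < e" using r e(1) unfolding s_def by simp
        then show "G \<in> {x \<in> UF X. pF x f \<in> W}" using e(2) GU by blast
      qed
    qed
  qed
qed

lemma pF_cont: "continuous_map (UF_top X) (BSC_top X absv) pF"
  unfolding BSC_top_def
proof (rule continuous_map_into_subtopology)
  show "pF \<in> topspace (UF_top X) \<rightarrow> BSC X absv" unfolding topspace_UF using pF_BSC by blast
  show "continuous_map (UF_top X) (product_topology (\<lambda>f. euclideanreal) (Cbd X absv)) pF"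
    unfolding continuous_map_componentwise
  proof (intro conjI ballI)
    show "pF ` topspace (UF_top X) \<subseteq> extensional (Cbd X absv)"
      unfolding extensional_def pF_def by auto
    fix f assume "f \<in> Cbd X absv"
    then show "continuous_map (UF_top X) euclideanreal (\<lambda>x. pF x f)" by (rule pF_comp_cont)
  qed
qed

lemma main_homeo: "homeomorphic_map (BSC_top X absv) (UF_top X) (Fsupp X absv)"
  unfolding homeomorphic_map_maps
proof (rule exI[of _ pF])
  show "homeomorphic_maps (BSC_top X absv) (UF_top X) (Fsupp X absv) pF"
    unfolding homeomorphic_maps_def
  proof (intro conjI ballI)
    show "continuous_map (BSC_top X absv) (UF_top X) (Fsupp X absv)" by (rule Fsupp_cont)
    show "continuous_map (UF_top X) (BSC_top X absv) pF" by (rule pF_cont)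
    fix p assume "p \<in> topspace (BSC_top X absv)"
    then show "pF (Fsupp X absv p) = p" unfolding topspace_BSC by (rule pF_Fsupp)
  next
    fix F assume "F \<in> topspace (UF_top X)"
    then show "Fsupp X absv (pF F) = F" unfolding topspace_UF by (rule Fsupp_pF)
  qed
qed

end

theorem mainTheorem1:
  fixes X :: "'a topology" and absv :: "'k::field \<Rightarrow> real"
  assumes "nonarch_complete_abs absv"
  shows "(\<forall>p\<in>BSC X absv. maximalideal (supp X absv p) (Cbd_ring X absv))
         \<and> homeomorphic_map (BSC_top X absv) (UF_top X) (Fsupp X absv)"
proof -
  interpret nac X absv by (rule nac.intro[OF assms])
  show ?thesis using supp_maximal main_homeo by blast
qed

end
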